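(* Let $\boldsymbol{m}\in\mathbb{N}^2$, $\mathscr{f}\in C(\mathbb{D})$, and $f(\boldsymbol{i})=\mathscr{f}(r_{i_1},\theta_{i_2})$ for $\boldsymbol{i}\in\mathrm{I}^{(\boldsymbol{m})}$. Let $P_f$ be the unique function in $\Pi_\square=\mathrm{span}\{X_{\boldsymbol{\gamma}}:\boldsymbol{\gamma}\in\Gamma_\square\}$ with $P_f(r_{i_1},\theta_{i_2})=f(\boldsymbol{i})$ for all $\boldsymbol{i}\in\mathrm{I}^{(\boldsymbol{m})}$. Then $P_f\in C(\mathbb{D})$; in particular $P_f(0,\theta)=\mathscr{f}(0,0)$ for all $\theta\in[-\pi,\pi]$.
   Context: Functions on the unit disk are written in polar coordinates $(r,\theta)\in[0,1]\times[-\pi,\pi]$, and $C(\mathbb{D})$ is the set of continuous $\mathscr{f}$ on $[0,1]\times[-\pi,\pi]$ with $\mathscr{f}(r,-\pi)=\mathscr{f}(r,\pi)$ for $0\le r\le1$ and $\mathscr{f}(0,\theta_1)=\mathscr{f}(0,\theta_2)$ for all $\theta_1,\theta_2$ (the common value at $r=0$ is written $\mathscr{f}(0,0)$). $\mathrm{I}^{(\boldsymbol{m})}=\{(i_1,i_2)\in\mathbb{Z}^2:\ 0\le i_1\le m_1,\ -2m_2<i_2\le 2m_2,\ i_2\le0\text{ if }i_1=m_1,\ i_1+i_2\text{ even}\}$, $r_{i_1}=\cos\!\big(\frac{i_1\pi}{2m_1}\big)$, $\theta_{i_2}=\frac{i_2\pi}{2m_2}$. $X_{\boldsymbol{\gamma}}(r,\theta)=T_{\gamma_1}(r)e^{\mathrm{i}\gamma_2\theta}$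 with $T_n(r)=\cos(n\arccos r)$. $\Gamma_\square=\{\boldsymbol{\gamma}\in\mathbb{Z}^2: 0\le\gamma_1\le2m_1,\ -m_2<\gamma_2\le m_2,\ \gamma_1+\gamma_2\text{ even}\}$; the interpolation problem in $\Pi_\square$ has a unique solution. *)

theory Defs
  imports "HOL-Analysis.Analysis"
begin

text \<open>Polar coordinates on the closed unit disk: (r, theta) in [0,1] x [-pi,pi].\<close>

definition polar_dom :: "(real \<times> real) set" where
  "polar_dom = {0..1} \<times> {-pi..pi}"

definition in_CD :: "(real \<times> real \<Rightarrow> complex) \<Rightarrow> bool" where
  "in_CD F \<longleftrightarrow> continuous_on polar_dom F
     \<and> (\<forall>r\<in>{0..1}. F (r, -pi) = F (r, pi))
     \<and> (\<forall>t1\<in>{-pi..pi}. \<forall>t2\<in>{-pi..pi}. F (0, t1) = F (0, t2))"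

definition cheb_T :: "nat \<Rightarrow> real \<Rightarrow> real" where
  "cheb_T n r = cos (real n * arccos r)"

definition X_fun :: "int \<times> int \<Rightarrow> real \<times> real \<Rightarrow> complex" where
  "X_fun \<gamma> p = complex_of_real (cheb_T (nat (fst \<gamma>)) (fst p))
                  * exp (\<i> * of_real (of_int (snd \<gamma>) * snd p))"

definition I_set :: "nat \<Rightarrow> nat \<Rightarrow> (int \<times> int) set" where
  "I_set m1 m2 = {(i1, i2). 0 \<le> i1 \<and> i1 \<le> int m1 \<and> - 2 * int m2 < i2 \<and> i2 \<le> 2 * int m2
                    \<and> (i1 = int m1 \<longrightarrow> i2 \<le> 0) \<and> even (i1 + i2)}"

definition r_node :: "nat \<Rightarrow> int \<Rightarrow> real" where
  "r_node m1 i1 = cos (of_int i1 * pi / (2 * real m1))"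

definition theta_node :: "nat \<Rightarrow> int \<Rightarrow> real" where
  "theta_node m2 i2 = of_int i2 * pi / (2 * real m2)"

definition Gamma_sq :: "nat \<Rightarrow> nat \<Rightarrow> (int \<times> int) set" where
  "Gamma_sq m1 m2 = {(g1, g2). 0 \<le> g1 \<and> g1 \<le> 2 * int m1 \<and> - int m2 < g2 \<and> g2 \<le> int m2
                      \<and> even (g1 + g2)}"

definition Pi_sq :: "nat \<Rightarrow> nat \<Rightarrow> (real \<times> real \<Rightarrow> complex) set" where
  "Pi_sq m1 m2 = {P. \<exists>c :: int \<times> int \<Rightarrow> complex.
                      P = (\<lambda>p. \<Sum>\<gamma>\<in>Gamma_sq m1 m2. c \<gamma> * X_fun \<gamma> p)}"

end

theory Submission imports Defs "HOL-Computational_Algebra.Polynomial" begin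
lemma cheb0_odd: "odd n \<Longrightarrow> cheb_T n 0 = 0"
  unfolding cheb_T_def by (auto simp: arccos_0 cos_zero_iff)

lemma exp_shift:
  fixes a k :: int and t :: real
  assumes "a \<le> k" "even (k - a)"
  shows "exp (\<i> * of_real (of_int a * t)) * exp (2 * \<i> * of_real t) ^ nat ((k - a) div 2)
         = exp (\<i> * of_real (of_int k * t))"
proof -
  define d where "d = (k - a) div 2"
  have k: "k = a + 2 * d" "d \<ge> 0" using assms unfolding d_def by auto
  have "exp (2 * \<i> * of_real t) ^ nat d = exp (of_nat (nat d) * (2 * \<i> * of_real t))"
    by (simp add: exp_of_nat_mult)
  also have "of_nat (nat d) = (of_int d :: complex)" using k by simp
  finally have "exp (\<i> * of_real (of_int a * t)) * exp (2 * \<i> * of_real t) ^ nat d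
      = exp (\<i> * of_real (of_int a * t) + of_int d * (2 * \<i> * of_real t))"
    by (simp add: exp_add)
  also have "\<i> * of_real (of_int a * t) + of_int d * (2 * \<i> * of_real t) = \<i> * of_real (of_int k * t)"
    using k by (simp add: algebra_simps)
  finally show ?thesis unfolding d_def .
qed

lemma aux_deg: fixes x :: int assumes "even x" "-int m < x" "x \<le> int m" "m \<ge> 1"
  shows "nat ((x - - 2 * ((int m - 1) div 2)) div 2) \<le> m - 1"
proof -
  obtain k where k: "x = 2*k" using assms(1) by blast
  consider p where "m = 2*p" | p where "m = 2*p+1" by (metis oddE evenE)
  then show ?thesis
  proof cases
    case 1 thus ?thesis using assms k by (simp add: nat_le_iff)
  next
    case 2 thus ?thesis using assms k by (simp add: nat_le_iff)
  qed
qed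

lemma P_zero_const:
  fixes m1 m2 :: nat and F P :: "real \<times> real \<Rightarrow> complex"
  assumes m1: "m1 \<ge> 1" and m2: "m2 \<ge> 1"
    and F: "in_CD F"
    and c: "P = (\<lambda>p. \<Sum>\<gamma>\<in>Gamma_sq m1 m2. c \<gamma> * X_fun \<gamma> p)"
    and interp: "\<forall>i\<in>I_set m1 m2. P (r_node m1 (fst i), theta_node m2 (snd i))
                              = F (r_node m1 (fst i), theta_node m2 (snd i))"
  shows "P (0, t) = F (0, 0)"
proof -
  define \<Gamma> where "\<Gamma> = Gamma_sq m1 m2"
  have finG: "finite \<Gamma>"
  proof -
    have "\<Gamma> \<subseteq> {0..2 * int m1} \<times> {- int m2..int m2}"
      unfolding \<Gamma>_def Gamma_sq_def by auto
    thus ?thesis by (rule finite_subset) auto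
  qed
  define a :: int where "a = - 2 * ((int m2 - 1) div 2)"
  define cp where "cp \<gamma> = c \<gamma> * complex_of_real (cheb_T (nat (fst \<gamma>)) 0)" for \<gamma>
  define e where "e \<gamma> = nat ((snd \<gamma> - a) div 2)" for \<gamma> :: "int \<times> int"
  define q where "q = (\<Sum>\<gamma>\<in>\<Gamma>. monom (cp \<gamma>) (e \<gamma>)) - monom (F (0,0)) (nat ((0 - a) div 2))"
  have term_eq: "c \<gamma> * X_fun \<gamma> (0, s) = exp (\<i> * of_real (of_int a * s)) * (cp \<gamma> * exp (2 * \<i> * of_real s) ^ e \<gamma>)"
    if "\<gamma> \<in> \<Gamma>" for \<gamma> s
  proof (cases "even (fst \<gamma>)")
    case True
    with that have ev: "even (snd \<gamma>)" "a \<le> snd \<gamma>"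
      unfolding \<Gamma>_def Gamma_sq_def a_def by auto
    have "even (snd \<gamma> - a)" using ev unfolding a_def by auto
    from exp_shift[OF ev(2) this, of s] show ?thesis
      unfolding X_fun_def cp_def e_def by (simp add: algebra_simps)
  next
    case False
    with that have "odd (nat (fst \<gamma>))" unfolding \<Gamma>_def Gamma_sq_def
      by (auto simp: even_nat_iff)
    hence "cheb_T (nat (fst \<gamma>)) 0 = 0" by (rule cheb0_odd)
    thus ?thesis unfolding X_fun_def cp_def by simp
  qed
  have const_eq: "exp (\<i> * of_real (of_int a * s)) * exp (2 * \<i> * of_real s) ^ nat ((0 - a) div 2) = 1" for s
  proof -
    have "a \<le> 0" "even (0 - a)" unfolding a_def using m2 by auto
    from exp_shift[OF this, of s] show ?thesis by simp
  qed
  have key: "P (0, s) - F (0,0) = exp (\<i> * of_real (of_int a * s)) * poly q (exp (2 * \<i> * of_real s))" for s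
  proof -
    have "P (0, s) = (\<Sum>\<gamma>\<in>\<Gamma>. exp (\<i> * of_real (of_int a * s)) * (cp \<gamma> * exp (2 * \<i> * of_real s) ^ e \<gamma>))"
      unfolding c \<Gamma>_def[symmetric] using term_eq by (intro sum.cong) auto
    also have "\<dots> = exp (\<i> * of_real (of_int a * s)) * poly (\<Sum>\<gamma>\<in>\<Gamma>. monom (cp \<gamma>) (e \<gamma>)) (exp (2 * \<i> * of_real s))"
      by (simp add: poly_sum poly_monom sum_distrib_left)
    finally show ?thesis
      unfolding q_def poly_diff poly_monom right_diff_distrib
      using const_eq[of s] by (simp add: mult.assoc[symmetric])
  qed
  have deg: "degree q \<le> m2 - 1"
  proof -
    have "degree (\<Sum>\<gamma>\<in>\<Gamma>. monom (cp \<gamma>) (e \<gamma>)) \<le> m2 - 1"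
    proof (rule degree_sum_le[OF finG])
      fix \<gamma> assume g: "\<gamma> \<in> \<Gamma>"
      show "degree (monom (cp \<gamma>) (e \<gamma>)) \<le> m2 - 1"
      proof (cases "even (fst \<gamma>)")
        case True
        with g have "even (snd \<gamma>)" "- int m2 < snd \<gamma>" "snd \<gamma> \<le> int m2"
          unfolding \<Gamma>_def Gamma_sq_def by auto
        hence "e \<gamma> \<le> m2 - 1" unfolding e_def a_def using m2 aux_deg by blast
        thus ?thesis by (meson degree_monom_le order_trans)
      next
        case False
        with g have "odd (nat (fst \<gamma>))" unfolding \<Gamma>_def Gamma_sq_def
          by (auto simp: even_nat_iff)
        hence "cp \<gamma> = 0" unfolding cp_def using cheb0_odd by simp
        thus ?thesis by simp
      qed
    qed
    moreover have "degree (monom (F (0,0)) (nat ((0 - a) div 2))) \<le> m2 - 1"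
      by (rule order_trans[OF degree_monom_le]) (use aux_deg[of 0 m2] m2 in \<open>simp add: a_def\<close>)
    ultimately show ?thesis unfolding q_def
      by (meson degree_diff_le)
  qed
  define sg :: int where "sg = int (m1 mod 2)"
  define i2 where "i2 l = - 2 * int l - sg" for l :: nat
  define z where "z l = exp (2 * \<i> * of_real (theta_node m2 (i2 l)))" for l
  have rootz: "poly q (z l) = 0" if "l < m2" for l
  proof -
    have mem: "(int m1, i2 l) \<in> I_set m1 m2"
      using that unfolding I_set_def i2_def sg_def by auto
    have r0: "r_node m1 (int m1) = 0" unfolding r_node_def using m1 by simp
    have th: "theta_node m2 (i2 l) \<in> {-pi..pi}"
    proof -
      have "- 2 * int m2 \<le> i2 l" "i2 l \<le> 0" using that unfolding i2_def sg_def by auto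
      hence "- 2 * real m2 \<le> of_int (i2 l)" "of_int (i2 l) \<le> (0::real)" by linarith+
      hence "- 2 * real m2 * pi \<le> of_int (i2 l) * pi" "of_int (i2 l) * pi \<le> 0"
        using mult_right_mono[of "- 2 * real m2" "of_int (i2 l)" pi]
        by (auto intro: mult_nonpos_nonneg)
      hence h1: "- pi * (2 * real m2) \<le> of_int (i2 l) * pi" and h2: "of_int (i2 l) * pi \<le> 0" by (simp_all add: mult_ac)
      have d: "2 * real m2 > 0" using m2 by simp
      have "- pi \<le> of_int (i2 l) * pi / (2 * real m2)" by (subst pos_le_divide_eq[OF d]) (rule h1)
      moreover have "of_int (i2 l) * pi / (2 * real m2) \<le> 0" using h2 d by (simp add: divide_nonpos_pos)
      ultimately show ?thesis unfolding theta_node_def using pi_ge_zero by auto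
    qed
    have "P (0, theta_node m2 (i2 l)) = F (0, theta_node m2 (i2 l))"
      using bspec[OF interp mem] r0 by simp
    also have "\<dots> = F (0, 0)"
    proof -
      from F have "\<forall>t1\<in>{-pi..pi}. \<forall>t2\<in>{-pi..pi}. F (0, t1) = F (0, t2)" unfolding in_CD_def by blast
      moreover have "(0::real) \<in> {-pi..pi}" using pi_ge_zero by simp
      ultimately show ?thesis using th by blast
    qed
    finally have "P (0, theta_node m2 (i2 l)) - F (0,0) = 0" by simp
    with key[of "theta_node m2 (i2 l)"] show ?thesis unfolding z_def by simp
  qed
  have injz: "inj_on z {..<m2}"
  proof (rule inj_onI)
    fix l l' assume l: "l \<in> {..<m2}" "l' \<in> {..<m2}" and eq: "z l = z l'"
    then obtain n :: int where n: "2 * \<i> * of_real (theta_node m2 (i2 l)) =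
        2 * \<i> * of_real (theta_node m2 (i2 l')) + of_int (2 * n) * pi * \<i>"
      unfolding z_def exp_eq by blast
    hence "2 * theta_node m2 (i2 l) = 2 * theta_node m2 (i2 l') + of_int (2 * n) * pi"
      by (simp add: complex_eq_iff)
    hence "of_int (i2 l) * pi / real m2 = of_int (i2 l') * pi / real m2 + of_int (2 * n) * pi"
      unfolding theta_node_def by simp
    hence "pi * of_int (i2 l) = pi * (of_int (i2 l') + of_int (2 * n) * real m2)"
      using m2 by (simp add: field_simps)
    hence "of_int (i2 l) = of_int (i2 l') + of_int (2 * n) * real m2"
      using pi_gt_zero by (metis mult_left_cancel less_irrefl)
    hence "(of_int (i2 l) :: real) = of_int (i2 l' + 2 * n * int m2)" by simp
    hence "i2 l = i2 l' + 2 * n * int m2" by (simp only: of_int_eq_iff)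
    hence h: "int l' - int l = n * int m2" unfolding i2_def by simp
    have "n = 0"
    proof (rule ccontr)
      assume "n \<noteq> 0"
      hence "\<bar>n * int m2\<bar> \<ge> int m2" by (simp add: abs_mult mult_le_cancel_right1) linarith
      moreover have "\<bar>int l' - int l\<bar> < int m2" using l by auto
      ultimately show False using h by simp
    qed
    with h show "l = l'" by simp
  qed
  have "q = 0"
  proof (rule poly_eqI_degree[of "z ` {..<m2}"])
    show "\<And>x. x \<in> z ` {..<m2} \<Longrightarrow> poly q x = poly 0 x" using rootz by auto
    show "degree q < card (z ` {..<m2})" using card_image[OF injz] deg m2 by simp
    show "degree (0::complex poly) < card (z ` {..<m2})" using card_image[OF injz] m2 by simp
  qed
  with key[of t] show ?thesis by simp
qed

lemma X_cont: "continuous_on polar_dom (X_fun g)"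
  unfolding X_fun_def cheb_T_def polar_dom_def
  by (intro continuous_intros) auto

lemma X_per: "X_fun g (r, -pi) = X_fun g (r, pi)"
proof -
  have "exp (\<i> * of_real (of_int (snd g) * - pi)) = exp (\<i> * of_real (of_int (snd g) * pi))"
    unfolding exp_eq by (rule exI[of _ "- snd g"]) (simp add: algebra_simps)
  thus ?thesis unfolding X_fun_def by simp
qed

theorem theorem8p1:
  fixes m1 m2 :: nat and F P :: "real \<times> real \<Rightarrow> complex"
  assumes "m1 \<ge> 1" and "m2 \<ge> 1"
    and "in_CD F"
    and "P \<in> Pi_sq m1 m2"
    and "\<forall>i\<in>I_set m1 m2. P (r_node m1 (fst i), theta_node m2 (snd i))
                              = F (r_node m1 (fst i), theta_node m2 (snd i))"
  shows "in_CD P \<and> (\<forall>\<theta>\<in>{-pi..pi}. P (0, \<theta>) = F (0, 0))"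
proof -
  obtain c where c: "P = (\<lambda>p. \<Sum>\<gamma>\<in>Gamma_sq m1 m2. c \<gamma> * X_fun \<gamma> p)"
    using assms(4) unfolding Pi_sq_def by blast
  have z: "P (0, t) = F (0, 0)" for t
    by (rule P_zero_const[OF assms(1,2,3) c assms(5)])
  have "continuous_on polar_dom P"
    unfolding c by (intro continuous_on_sum continuous_on_mult continuous_on_const X_cont)
  moreover have "\<forall>r\<in>{0..1}. P (r, -pi) = P (r, pi)"
    unfolding c using X_per by simp
  ultimately show ?thesis unfolding in_CD_def using z by simp
qed

end
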